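(* Consider the two additive-noise structural causal models $$\mathcal{M}:\ X_1=U_1,\ X_2=X_1+U_2,\ Y=X_1X_2+U_Y, \qquad (U_1,U_2,U_Y)\sim\mathcal{N}(0,\Sigma),\ \Sigma=\begin{bmatrix}1&1&1\\1&1&1\\1&1&1\end{bmatrix},$$ $$\mathcal{M}':\ X_1=U_1,\ X_2=2X_1+U_2,\ Y=X_1X_2+U_Y, \qquad (U_1,U_2,U_Y)\sim\mathcal{N}(0,\Sigma'),\ \Sigma'=\begin{bmatrix}1&0&1\\0&0&0\\1&0&1\end{bmatrix}.$$ Then $\mathcal{M}$ and $\mathcal{M}'$ induce the same observational distribution of $(X_1,X_2,Y)$, the same joint interventional distributions under $\mathrm{do}(X_1=x_1,X_2=x_2)$, and the same interventional distributions under $\mathrm{do}(X_2=x_2)$, but they disagree on the causal effect of intervening on $X_1$ (e.g. on $\mathbb{E}[Y\mid\mathrm{do}(X_1=x_1)]$ for $x_1\neq 0$). Consequently, in additive noise models with zero-mean Gaussian noise and an unrestricted causal graph (in particular, with a causal edge between treatments), single-variable interventional effects are not in general identifiable from observational and joint interventional data.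
   Context: An additive noise model is a structural causal model in which each endogenous variable equals a function of its parents plus an exogenous noise term; here the noise vector is zero-mean multivariate Gaussian with arbitrary (possibly singular) covariance. An intervention $\mathrm{do}(X=x)$ replaces the structural equation of $X$ by the constant $x$. *)

theory Defs
  imports "HOL-Probability.Probability"
begin

text \<open>A (possibly degenerate) zero-mean multivariate Gaussian random vector in R^3 with
  covariance matrix S: every linear functional c . U is N(0, c' S c), where
  N(0,0) is the point mass at 0.\<close>
definition centered_gaussian_vector ::
  "'a measure \<Rightarrow> ('a \<Rightarrow> real^3) \<Rightarrow> real^3^3 \<Rightarrow> bool" where
  "centered_gaussian_vector M U S \<longleftrightarrow>
     U \<in> borel_measurable M \<and>
     (\<forall>c::real^3. distr M borel (\<lambda>\<omega>. c \<bullet> U \<omega>) =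
        (if c \<bullet> (S *v c) = 0 then return borel 0
         else density lborel (normal_density 0 (sqrt (c \<bullet> (S *v c))))))"

text \<open>The optional arguments i1, i2 encode interventions do(X1 = a) (i1 = Some a) and
  do(X2 = b) (i2 = Some b); None means no intervention.
  Output and noise vectors are indexed 1 = X1/U1, 2 = X2/U2, 3 = Y/UY.\<close>
definition anm3 ::
  "(real \<Rightarrow> real) \<Rightarrow> (real \<Rightarrow> real \<Rightarrow> real) \<Rightarrow> real option \<Rightarrow> real option
     \<Rightarrow> real^3 \<Rightarrow> real^3" where
  "anm3 f2 fY i1 i2 u =
     (let x1 = (case i1 of None \<Rightarrow> u $ 1 | Some a \<Rightarrow> a);
          x2 = (case i2 of None \<Rightarrow> f2 x1 + u $ 2 | Some b \<Rightarrow> b)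
      in vector [x1, x2, fY x1 x2 + u $ 3])"

definition anm3_distr ::
  "'a measure \<Rightarrow> ('a \<Rightarrow> real^3) \<Rightarrow> (real \<Rightarrow> real) \<Rightarrow> (real \<Rightarrow> real \<Rightarrow> real)
     \<Rightarrow> real option \<Rightarrow> real option \<Rightarrow> (real^3) measure" where
  "anm3_distr M U f2 fY i1 i2 = distr M borel (\<lambda>\<omega>. anm3 f2 fY i1 i2 (U \<omega>))"

definition Sigma1 :: "real^3^3" where
  "Sigma1 = vector [vector [1,1,1], vector [1,1,1], vector [1,1,1]]"

definition Sigma2 :: "real^3^3" where
  "Sigma2 = vector [vector [1,0,1], vector [0,0,0], vector [1,0,1]]"

end

theory Submission imports Defs begin

lemma vector3_chi: "vector [a,b,c] = (\<chi> i::3. if i = 1 then a else if i = 2 then b else (c::real))"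
  by (simp add: vec_eq_iff forall_3 vector_3)

lemma quad1: "(c::real^3) \<bullet> (Sigma1 *v c) = (c$1 + c$2 + c$3)^2"
  by (simp add: Sigma1_def inner_vec_def sum_3 matrix_vector_mult_def vector_3 power2_eq_square algebra_simps)

lemma quad2: "(c::real^3) \<bullet> (Sigma2 *v c) = (c$1 + c$3)^2"
  by (simp add: Sigma2_def inner_vec_def sum_3 matrix_vector_mult_def vector_3 power2_eq_square algebra_simps)

lemma gauss_zero:
  assumes "centered_gaussian_vector M U S" "c \<bullet> (S *v c) = 0"
  shows "AE \<omega> in M. c \<bullet> U \<omega> = 0"
proof -
  have m: "U \<in> borel_measurable M" using assms(1) unfolding centered_gaussian_vector_def by auto
  have mm: "(\<lambda>\<omega>. c \<bullet> U \<omega>) \<in> borel_measurable M" using m by measurable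
  have eq: "distr M borel (\<lambda>\<omega>. c \<bullet> U \<omega>) = return borel 0"
    using assms unfolding centered_gaussian_vector_def by auto
  have "AE x in distr M borel (\<lambda>\<omega>. c \<bullet> U \<omega>). x = 0" unfolding eq by (simp add: AE_return)
  from AE_distrD[OF mm this] show ?thesis .
qed

lemma gauss_one:
  assumes "centered_gaussian_vector M U S" "c \<bullet> (S *v c) = 1"
  shows "distr M borel (\<lambda>\<omega>. c \<bullet> U \<omega>) = density lborel (normal_density 0 1)"
  using assms unfolding centered_gaussian_vector_def by auto


lemma cont_if: "continuous_on S f \<Longrightarrow> continuous_on S g \<Longrightarrow> continuous_on S (\<lambda>x. if P then f x else g x)"
  by (cases P) auto

lemma anm3_meas:
  assumes "continuous_on UNIV f2"
  shows "anm3 f2 (\<lambda>a b. a * b) i1 i2 \<in> borel_measurable borel"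
proof -
  have "continuous_on UNIV (anm3 f2 (\<lambda>a b. a * b) i1 i2)"
    by (cases i1; cases i2; simp add: anm3_def Let_def vector3_chi;
        intro continuous_on_vec_lambda cont_if continuous_intros continuous_on_compose2[OF assms];
        auto intro: continuous_intros)
  thus ?thesis by (rule borel_measurable_continuous_onI)
qed

lemma gM_meas: "(\<lambda>x::real. (\<chi> i::3. x)) \<in> borel_measurable borel"
  by (intro borel_measurable_continuous_onI continuous_on_vec_lambda continuous_intros)

lemma gN_meas: "(\<lambda>x::real. (\<chi> i::3. if i = 2 then 0 else x)) \<in> borel_measurable borel"
  by (intro borel_measurable_continuous_onI continuous_on_vec_lambda cont_if continuous_intros)

lemma transfer:
  fixes U :: "'a \<Rightarrow> real^3"
  assumes "AE \<omega> in M. U \<omega> = g (U \<omega> $ 1)" "U \<in> borel_measurable M"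
    "distr M borel (\<lambda>\<omega>. U \<omega> $ 1) = G" "F \<in> borel_measurable borel" "g \<in> borel_measurable borel"
  shows "distr M borel (\<lambda>\<omega>. F (U \<omega>)) = distr G borel (\<lambda>x. F (g x))"
proof -
  have u1: "(\<lambda>\<omega>. U \<omega> $ 1) \<in> borel_measurable M" by (rule measurable_compose[OF assms(2)]) (rule borel_measurable_continuous_onI[OF linear_continuous_on[OF bounded_linear_vec_nth]])
  have "distr M borel (\<lambda>\<omega>. F (U \<omega>)) = distr M borel (\<lambda>\<omega>. F (g (U \<omega> $ 1)))"
    apply (rule distr_cong_AE)
    using assms(1) apply (auto elim!: AE_mp)
    using assms(2,4,5) u1 by measurable
  also have "\<dots> = distr G borel (\<lambda>x. F (g x))"
    unfolding assms(3)[symmetric]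
    by (subst distr_distr) (use assms(4,5) u1 in \<open>auto simp: comp_def\<close>)
  finally show ?thesis .
qed

lemma std_lin: "integral\<^sup>L std_normal_distribution (\<lambda>x. c + d * x) = (c::real)"
proof -
  have h: "has_bochner_integral std_normal_distribution (\<lambda>x. x) (0::real)"
    apply (rule has_bochner_integral_density)
    apply auto
    using normal_moment_nz_1[of 1 0]
    apply (simp add: mult.commute)
    done
  interpret prob_space std_normal_distribution using prob_space_normal_density[of 1 0] by simp
  have i: "integrable std_normal_distribution (\<lambda>x. x::real)" using h by (simp add: has_bochner_integral_iff)
  have "integral\<^sup>L std_normal_distribution (\<lambda>x. c + d * x) = integral\<^sup>L std_normal_distribution (\<lambda>x. c) + integral\<^sup>L std_normal_distribution (\<lambda>x. d * x)"
    by (rule Bochner_Integration.integral_add) (use i in auto)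
  moreover have "prob UNIV = 1" using prob_space by simp
  ultimately show ?thesis using h by (simp add: has_bochner_integral_iff)
qed

lemma inner3: "(vector [a,b,c] :: real^3) \<bullet> x = a * x$1 + b * x$2 + c * x$3"
  by (simp add: inner_vec_def sum_3 vector_3)

lemma int_transfer:
  fixes U :: "'a \<Rightarrow> real^3" and F :: "real^3 \<Rightarrow> real^3" and h :: "real \<Rightarrow> real^3"
  assumes "U \<in> borel_measurable M" "F \<in> borel_measurable borel"
    "distr M borel (\<lambda>\<omega>. F (U \<omega>)) = distr std_normal_distribution borel h"
    "h \<in> borel_measurable borel" "\<And>x. h x $ 3 = c + d * x"
  shows "(\<integral>\<omega>. F (U \<omega>) $ 3 \<partial>M) = c"
proof -
  have m3: "(\<lambda>x::real^3. x $ 3) \<in> borel_measurable borel"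
    by (rule borel_measurable_continuous_onI[OF linear_continuous_on[OF bounded_linear_vec_nth]])
  have mF: "(\<lambda>\<omega>. F (U \<omega>)) \<in> borel_measurable M" using assms(1,2) by (rule measurable_compose)
  have "(\<integral>\<omega>. F (U \<omega>) $ 3 \<partial>M) = (\<integral>x. x $ 3 \<partial>distr M borel (\<lambda>\<omega>. F (U \<omega>)))"
    by (rule integral_distr[OF mF m3, symmetric])
  also have "\<dots> = (\<integral>x. h x $ 3 \<partial>std_normal_distribution)"
    unfolding assms(3)
  proof (rule integral_distr[OF _ m3])
    show "h \<in> borel_measurable std_normal_distribution"
      using measurable_cong_sets[of std_normal_distribution borel borel borel] assms(4) by simp
  qed
  also have "\<dots> = c" unfolding assms(5) by (rule std_lin)
  finally show ?thesis .
qed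

theorem mainTheorem4:
  fixes M :: "'a measure" and U :: "'a \<Rightarrow> real^3"
    and N :: "'b measure" and V :: "'b \<Rightarrow> real^3"
  assumes "prob_space M" and "centered_gaussian_vector M U Sigma1"
    and "prob_space N" and "centered_gaussian_vector N V Sigma2"
  shows "anm3_distr M U (\<lambda>x1. x1) (\<lambda>x1 x2. x1 * x2) None None
           = anm3_distr N V (\<lambda>x1. 2 * x1) (\<lambda>x1 x2. x1 * x2) None None \<and>
         (\<forall>x1 x2. anm3_distr M U (\<lambda>x1. x1) (\<lambda>x1 x2. x1 * x2) (Some x1) (Some x2)
           = anm3_distr N V (\<lambda>x1. 2 * x1) (\<lambda>x1 x2. x1 * x2) (Some x1) (Some x2)) \<and>
         (\<forall>x2. anm3_distr M U (\<lambda>x1. x1) (\<lambda>x1 x2. x1 * x2) None (Some x2)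
           = anm3_distr N V (\<lambda>x1. 2 * x1) (\<lambda>x1 x2. x1 * x2) None (Some x2)) \<and>
         (\<forall>x1. x1 \<noteq> 0 \<longrightarrow>
           anm3_distr M U (\<lambda>x1. x1) (\<lambda>x1 x2. x1 * x2) (Some x1) None
           \<noteq> anm3_distr N V (\<lambda>x1. 2 * x1) (\<lambda>x1 x2. x1 * x2) (Some x1) None) \<and>
         (\<forall>x1. x1 \<noteq> 0 \<longrightarrow>
           (\<integral>\<omega>. anm3 (\<lambda>x1. x1) (\<lambda>x1 x2. x1 * x2) (Some x1) None (U \<omega>) $ 3 \<partial>M)
           \<noteq> (\<integral>\<omega>. anm3 (\<lambda>x1. 2 * x1) (\<lambda>x1 x2. x1 * x2) (Some x1) None (V \<omega>) $ 3 \<partial>N))"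
proof -
  have mU: "U \<in> borel_measurable M" using assms(2) unfolding centered_gaussian_vector_def by auto
  have mV: "V \<in> borel_measurable N" using assms(4) unfolding centered_gaussian_vector_def by auto
  have GM: "distr M borel (\<lambda>\<omega>. U \<omega> $ 1) = std_normal_distribution"
    using gauss_one[OF assms(2), of "vector [1,0,0]"] by (simp add: quad1 vector_3 inner3)
  have GN: "distr N borel (\<lambda>\<omega>. V \<omega> $ 1) = std_normal_distribution"
    using gauss_one[OF assms(4), of "vector [1,0,0]"] by (simp add: quad2 vector_3 inner3)
  have AE1: "AE \<omega> in M. U \<omega> $ 1 - U \<omega> $ 2 = 0"
    using gauss_zero[OF assms(2), of "vector [1,-1,0]"] by (simp add: quad1 vector_3 inner3)
  have AE2: "AE \<omega> in M. U \<omega> $ 1 - U \<omega> $ 3 = 0"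
    using gauss_zero[OF assms(2), of "vector [1,0,-1]"] by (simp add: quad1 vector_3 inner3)
  have AE3: "AE \<omega> in N. V \<omega> $ 2 = 0"
    using gauss_zero[OF assms(4), of "vector [0,1,0]"] by (simp add: quad2 vector_3 inner3)
  have AE4: "AE \<omega> in N. V \<omega> $ 1 - V \<omega> $ 3 = 0"
    using gauss_zero[OF assms(4), of "vector [1,0,-1]"] by (simp add: quad2 vector_3 inner3)
  have AEM: "AE \<omega> in M. U \<omega> = (\<lambda>x. \<chi> i::3. x) (U \<omega> $ 1)"
    using AE1 AE2 by eventually_elim (simp add: vec_eq_iff forall_3)
  have AEN: "AE \<omega> in N. V \<omega> = (\<lambda>x. \<chi> i::3. if i = 2 then 0 else x) (V \<omega> $ 1)"
    using AE3 AE4 by eventually_elim (simp add: vec_eq_iff forall_3)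
  have c1: "continuous_on UNIV (\<lambda>x::real. x)" by (intro continuous_intros)
  have c2: "continuous_on UNIV (\<lambda>x::real. 2 * x)" by (intro continuous_intros)
  have tM: "anm3_distr M U (\<lambda>x1. x1) (\<lambda>x1 x2. x1 * x2) i1 i2
     = distr std_normal_distribution borel (\<lambda>x. anm3 (\<lambda>x1. x1) (\<lambda>x1 x2. x1 * x2) i1 i2 (\<chi> i. x))" for i1 i2
    unfolding anm3_distr_def by (rule transfer[OF AEM mU GM anm3_meas[OF c1] gM_meas])
  have tN: "anm3_distr N V (\<lambda>x1. 2 * x1) (\<lambda>x1 x2. x1 * x2) i1 i2
     = distr std_normal_distribution borel (\<lambda>x. anm3 (\<lambda>x1. 2 * x1) (\<lambda>x1 x2. x1 * x2) i1 i2 (\<chi> i. if i = 2 then 0 else x))" for i1 i2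
    unfolding anm3_distr_def by (rule transfer[OF AEN mV GN anm3_meas[OF c2] gN_meas])
  have hM: "(\<lambda>x. anm3 (\<lambda>x1. x1) (\<lambda>x1 x2. x1 * x2) i1 i2 (\<chi> i. x)) \<in> borel_measurable borel" for i1 i2
    by (rule measurable_compose[OF gM_meas anm3_meas[OF c1]])
  have hN: "(\<lambda>x. anm3 (\<lambda>x1. 2 * x1) (\<lambda>x1 x2. x1 * x2) i1 i2 (\<chi> i. if i = 2 then 0 else x)) \<in> borel_measurable borel" for i1 i2
    by (rule measurable_compose[OF gN_meas anm3_meas[OF c2]])
  have P1: "anm3_distr M U (\<lambda>x1. x1) (\<lambda>x1 x2. x1 * x2) None None
           = anm3_distr N V (\<lambda>x1. 2 * x1) (\<lambda>x1 x2. x1 * x2) None None"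
    unfolding tM tN by (rule arg_cong[where f="distr _ _"]) (simp add: fun_eq_iff anm3_def vec_eq_iff forall_3 vector_3)
  have P2: "anm3_distr M U (\<lambda>x1. x1) (\<lambda>x1 x2. x1 * x2) (Some x1) (Some x2)
           = anm3_distr N V (\<lambda>x1. 2 * x1) (\<lambda>x1 x2. x1 * x2) (Some x1) (Some x2)" for x1 x2
    unfolding tM tN by (rule arg_cong[where f="distr _ _"]) (simp add: fun_eq_iff anm3_def vec_eq_iff forall_3 vector_3)
  have P3: "anm3_distr M U (\<lambda>x1. x1) (\<lambda>x1 x2. x1 * x2) None (Some x2)
           = anm3_distr N V (\<lambda>x1. 2 * x1) (\<lambda>x1 x2. x1 * x2) None (Some x2)" for x2
    unfolding tM tN by (rule arg_cong[where f="distr _ _"]) (simp add: fun_eq_iff anm3_def vec_eq_iff forall_3 vector_3 algebra_simps)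
  have EM: "(\<integral>\<omega>. anm3 (\<lambda>x1. x1) (\<lambda>x1 x2. x1 * x2) (Some a) None (U \<omega>) $ 3 \<partial>M) = a * a" for a
    by (rule int_transfer[OF mU anm3_meas[OF c1] tM[unfolded anm3_distr_def] hM, where c="a * a" and d="a + 1"])
       (simp add: anm3_def Let_def vector_3 algebra_simps)
  have EN: "(\<integral>\<omega>. anm3 (\<lambda>x1. 2 * x1) (\<lambda>x1 x2. x1 * x2) (Some a) None (V \<omega>) $ 3 \<partial>N) = 2 * a * a" for a
    by (rule int_transfer[OF mV anm3_meas[OF c2] tN[unfolded anm3_distr_def] hN, where c="2 * a * a" and d="1"])
       (simp add: anm3_def Let_def vector_3 algebra_simps)
  have P5: "(\<integral>\<omega>. anm3 (\<lambda>x1. x1) (\<lambda>x1 x2. x1 * x2) (Some a) None (U \<omega>) $ 3 \<partial>M)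
           \<noteq> (\<integral>\<omega>. anm3 (\<lambda>x1. 2 * x1) (\<lambda>x1 x2. x1 * x2) (Some a) None (V \<omega>) $ 3 \<partial>N)" if "a \<noteq> 0" for a
    unfolding EM EN using that by simp
  have m3: "(\<lambda>x::real^3. x $ 3) \<in> borel_measurable borel"
    by (rule borel_measurable_continuous_onI[OF linear_continuous_on[OF bounded_linear_vec_nth]])
  have P4: "anm3_distr M U (\<lambda>x1. x1) (\<lambda>x1 x2. x1 * x2) (Some a) None
           \<noteq> anm3_distr N V (\<lambda>x1. 2 * x1) (\<lambda>x1 x2. x1 * x2) (Some a) None" if "a \<noteq> 0" for a
  proof
    assume eq: "anm3_distr M U (\<lambda>x1. x1) (\<lambda>x1 x2. x1 * x2) (Some a) None
           = anm3_distr N V (\<lambda>x1. 2 * x1) (\<lambda>x1 x2. x1 * x2) (Some a) None"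
    have mFU: "(\<lambda>\<omega>. anm3 (\<lambda>x1. x1) (\<lambda>x1 x2. x1 * x2) (Some a) None (U \<omega>)) \<in> borel_measurable M"
      by (rule measurable_compose[OF mU anm3_meas[OF c1]])
    have mFV: "(\<lambda>\<omega>. anm3 (\<lambda>x1. 2 * x1) (\<lambda>x1 x2. x1 * x2) (Some a) None (V \<omega>)) \<in> borel_measurable N"
      by (rule measurable_compose[OF mV anm3_meas[OF c2]])
    have "(\<integral>\<omega>. anm3 (\<lambda>x1. x1) (\<lambda>x1 x2. x1 * x2) (Some a) None (U \<omega>) $ 3 \<partial>M)
        = (\<integral>x. x $ 3 \<partial>anm3_distr M U (\<lambda>x1. x1) (\<lambda>x1 x2. x1 * x2) (Some a) None)"
      unfolding anm3_distr_def by (rule integral_distr[OF mFU m3, symmetric])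
    also have "\<dots> = (\<integral>x. x $ 3 \<partial>anm3_distr N V (\<lambda>x1. 2 * x1) (\<lambda>x1 x2. x1 * x2) (Some a) None)"
      by (simp only: eq)
    also have "\<dots> = (\<integral>\<omega>. anm3 (\<lambda>x1. 2 * x1) (\<lambda>x1 x2. x1 * x2) (Some a) None (V \<omega>) $ 3 \<partial>N)"
      unfolding anm3_distr_def by (rule integral_distr[OF mFV m3])
    finally show False using P5[OF that] by simp
  qed
  show ?thesis using P1 P2 P3 P4 P5 by blast
qed

end
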